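(* Let $G$ be a graph. If $G$ has a pan cycle $C$, then $\mathsf{pn}(G)=\mathsf{pn}(G-C)+1$, where $G-C$ denotes the graph obtained from $G$ by deleting all edges of $C$.
   Context: All graphs are finite, simple and undirected. A path partition of $G$ is a collection of pairwise edge-disjoint paths in $G$ whose edge sets together cover $E(G)$; $\mathsf{pn}(G)$ is the minimum size of a path partition. A pan cycle of $G$ is a cycle $C$ in $G$ containing a unique vertex $v$ with $\deg_G(v)=3$, while every other vertex $w$ of $C$ has $\deg_G(w)=2$. *)

theory Defs
  imports Main
begin

definition graph :: "'a set \<Rightarrow> 'a set set \<Rightarrow> bool" where
  "graph V E \<longleftrightarrow> finite V \<and> (\<forall>e\<in>E. \<exists>u v. e = {u, v} \<and> u \<noteq> v \<and> u \<in> V \<and> v \<in> V)"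

definition degree :: "'a set set \<Rightarrow> 'a \<Rightarrow> nat" where
  "degree E v = card {e \<in> E. v \<in> e}"

definition walk_edges :: "'a list \<Rightarrow> 'a set set" where
  "walk_edges xs = set (map (\<lambda>(u, v). {u, v}) (zip xs (tl xs)))"

definition is_path :: "'a set \<Rightarrow> 'a set set \<Rightarrow> 'a list \<Rightarrow> bool" where
  "is_path V E xs \<longleftrightarrow> length xs \<ge> 2 \<and> distinct xs \<and> set xs \<subseteq> V \<and>
     (\<forall>i < length xs - 1. {xs ! i, xs ! Suc i} \<in> E)"

definition is_cycle :: "'a set \<Rightarrow> 'a set set \<Rightarrow> 'a list \<Rightarrow> bool" where
  "is_cycle V E xs \<longleftrightarrow> length xs \<ge> 3 \<and> distinct xs \<and> set xs \<subseteq> V \<and>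
     (\<forall>i < length xs - 1. {xs ! i, xs ! Suc i} \<in> E) \<and> {last xs, hd xs} \<in> E"

definition cycle_edges :: "'a list \<Rightarrow> 'a set set" where
  "cycle_edges xs = walk_edges xs \<union> {{last xs, hd xs}}"

text \<open>A path partition, represented by the set of edge sets of its paths
  (paths are nonempty and pairwise edge-disjoint, so this loses nothing).\<close>
definition path_partition :: "'a set \<Rightarrow> 'a set set \<Rightarrow> 'a set set set \<Rightarrow> bool" where
  "path_partition V E P \<longleftrightarrow>
     (\<forall>p\<in>P. \<exists>xs. is_path V E xs \<and> p = walk_edges xs) \<and>
     pairwise disjnt P \<and> \<Union>P = E"

definition pn :: "'a set \<Rightarrow> 'a set set \<Rightarrow> nat" where
  "pn V E = (LEAST n. \<exists>P. path_partition V E P \<and> card P = n)"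

definition is_pan_cycle :: "'a set \<Rightarrow> 'a set set \<Rightarrow> 'a list \<Rightarrow> bool" where
  "is_pan_cycle V E C \<longleftrightarrow> is_cycle V E C \<and>
     (\<exists>v\<in>set C. degree E v = 3 \<and> (\<forall>w\<in>set C. w \<noteq> v \<longrightarrow> degree E w = 2))"

end

theory Submission
  imports Defs
begin


lemma we_simps[simp]:
  "walk_edges [] = {}" "walk_edges [x] = {}" "walk_edges (x#y#xs) = insert {x,y} (walk_edges (y#xs))"
  by (simp_all add: walk_edges_def)

lemma we_append: "xs \<noteq> [] \<Longrightarrow> ys \<noteq> [] \<Longrightarrow>
  walk_edges (xs @ ys) = walk_edges xs \<union> walk_edges ys \<union> {{last xs, hd ys}}"
proof (induction xs)
  case Nil then show ?case by simp
next
  case (Cons x xs)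
  show ?case
  proof (cases xs)
    case Nil
    then show ?thesis using Cons.prems by (cases ys) auto
  next
    case (Cons z zs)
    then show ?thesis using Cons.IH Cons.prems by auto
  qed
qed

lemma we_split: "walk_edges (as @ v # bs) = walk_edges (as @ [v]) \<union> walk_edges (v # bs)"
proof (cases "as = []")
  case True then show ?thesis by simp
next
  case False
  then show ?thesis using we_append[of as "v#bs"] we_append[of as "[v]"] by auto
qed

lemma we_nth: "walk_edges xs = {{xs!i, xs!Suc i} | i. i < length xs - 1}"
  unfolding walk_edges_def set_map set_zip
  apply (auto simp: nth_tl)
  apply (rule_tac x="(xs ! i, tl xs ! i)" in image_eqI)
   apply (auto simp: nth_tl)
  done

lemma we_sub: "e \<in> walk_edges xs \<Longrightarrow> \<exists>a b. e = {a,b} \<and> a \<in> set xs \<and> b \<in> set xs"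
  unfolding we_nth by (fastforce intro: nth_mem)

lemma we_rev: "walk_edges (rev xs) = walk_edges xs"
proof (induction xs)
  case Nil then show ?case by simp
next
  case (Cons x xs)
  show ?case
  proof (cases xs)
    case Nil then show ?thesis by simp
  next
    case (Cons y ys)
    then show ?thesis using Cons.IH we_append[of "rev xs" "[x]"] by (auto simp: last_rev insert_commute)
  qed
qed

lemma is_path_alt: "is_path V E xs \<longleftrightarrow> 2 \<le> length xs \<and> distinct xs \<and> set xs \<subseteq> V \<and> walk_edges xs \<subseteq> E"
  by (auto simp: is_path_def we_nth)

lemma is_cycle_alt: "is_cycle V E xs \<longleftrightarrow> 3 \<le> length xs \<and> distinct xs \<and> set xs \<subseteq> V \<and> cycle_edges xs \<subseteq> E"
  by (auto simp: is_cycle_def cycle_edges_def we_nth)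

lemma vertex_in_edge: "2 \<le> length xs \<Longrightarrow> x \<in> set xs \<Longrightarrow> \<exists>e\<in>walk_edges xs. x \<in> e"
proof -
  assume a: "2 \<le> length xs" "x \<in> set xs"
  then obtain i where i: "i < length xs" "xs ! i = x" by (auto simp: in_set_conv_nth)
  show ?thesis
  proof (cases "i < length xs - 1")
    case True then show ?thesis unfolding we_nth using i by blast
  next
    case False
    then have "i - 1 < length xs - 1" "Suc (i - 1) = i" using a i by auto
    then show ?thesis unfolding we_nth using i by (metis (mono_tags, lifting) insertCI mem_Collect_eq)
  qed
qed

lemma ce_rotate1: "2 \<le> length xs \<Longrightarrow> cycle_edges (rotate1 xs) = cycle_edges xs"
proof (cases xs)
  case Nil
  assume "2 \<le> length xs" then show ?thesis using Nil by simp
next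
  case (Cons x ys)
  assume "2 \<le> length xs"
  then obtain y zs where ys: "ys = y # zs" using Cons by (cases ys) auto
  show ?thesis using Cons ys we_append[of ys "[x]"]
    by (auto simp: cycle_edges_def insert_commute)
qed

lemma ce_rotate: "2 \<le> length xs \<Longrightarrow> cycle_edges (rotate n xs) = cycle_edges xs"
  by (induction n) (auto simp: rotate_Suc ce_rotate1)

lemma rotate_to: "2 \<le> length xs \<Longrightarrow> u \<in> set xs \<Longrightarrow>
  \<exists>ds. cycle_edges (u#ds) = cycle_edges xs \<and> set (u#ds) = set xs \<and> distinct (u#ds) = distinct xs
    \<and> length (u#ds) = length xs"
proof -
  assume a: "2 \<le> length xs" "u \<in> set xs"
  then obtain i where i: "i < length xs" "xs ! i = u" by (auto simp: in_set_conv_nth)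
  have ne: "rotate i xs \<noteq> []" using a by auto
  have "xs \<noteq> []" using a by auto
  then have "hd (rotate i xs) = u" using hd_rotate_conv_nth[of xs i] a i by auto
  then have "rotate i xs = u # tl (rotate i xs)" using ne by (cases "rotate i xs") auto
  then show ?thesis using ce_rotate[OF a(1), of i]
    by (metis distinct_rotate length_rotate set_rotate)
qed

lemma cyc_deg_head: "distinct (u#ds) \<Longrightarrow> 2 \<le> length ds \<Longrightarrow>
   {e \<in> cycle_edges (u#ds). u \<in> e} = {{u, hd ds}, {last ds, u}} \<and> {u, hd ds} \<noteq> {last ds, u}"
proof -
  assume a: "distinct (u#ds)" "2 \<le> length ds"
  then obtain a b rest where ds: "ds = a # b # rest" by (metis One_nat_def Suc_1 Suc_le_length_iff)
  have la: "last ds \<noteq> a" using a ds by (metis distinct.simps(2) last_ConsR last_in_set list.distinct(1))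
  have nu: "\<forall>e\<in>walk_edges ds. u \<notin> e" using a by (force dest: we_sub)
  have "{e \<in> cycle_edges (u#ds). u \<in> e} = {{u, hd ds}, {last ds, u}}"
    using nu ds by (auto simp: cycle_edges_def)
  moreover have "{u, hd ds} \<noteq> {last ds, u}" using la ds a by (auto simp: doubleton_eq_iff)
  ultimately show ?thesis by blast
qed

lemma cyc_deg: "distinct C \<Longrightarrow> 3 \<le> length C \<Longrightarrow> u \<in> set C \<Longrightarrow> card {e \<in> cycle_edges C. u \<in> e} = 2"
proof -
  assume a: "distinct C" "3 \<le> length C" "u \<in> set C"
  then obtain ds where ds: "cycle_edges (u#ds) = cycle_edges C" "distinct (u#ds)" "length (u#ds) = length C"
    using rotate_to[of C u] by auto
  show ?thesis using cyc_deg_head[OF ds(2)] ds a by auto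
qed

lemma status:
  assumes H1: "\<forall>e\<in>EC. e \<subseteq> S"
    and H2: "\<forall>u\<in>S. u \<noteq> v \<longrightarrow> (\<forall>e\<in>E. u \<in> e \<longrightarrow> e \<in> EC)"
  shows "walk_edges zs \<subseteq> E \<Longrightarrow> v \<notin> set (butlast (tl zs)) \<Longrightarrow>
     walk_edges zs \<subseteq> EC \<or> walk_edges zs \<inter> EC = {}"
proof (induction zs)
  case Nil then show ?case by simp
next
  case (Cons x zs)
  show ?case
  proof (cases zs)
    case Nil then show ?thesis by simp
  next
    case (Cons y rest)
    show ?thesis
    proof (cases rest)
      case Nil then show ?thesis using Cons by auto
    next
      case (Cons z rest')
      have yv: "y \<noteq> v" using Cons.prems \<open>zs = y # rest\<close> Cons by auto
      have IH: "walk_edges zs \<subseteq> EC \<or> walk_edges zs \<inter> EC = {}"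
        using Cons.IH Cons.prems \<open>zs = y # rest\<close> Cons by (auto dest: in_set_butlastD)
      have e1: "{x,y} \<in> E" "{y,z} \<in> E" "{y,z} \<in> walk_edges zs"
        using Cons.prems \<open>zs = y # rest\<close> Cons by auto
      show ?thesis
      proof (cases "y \<in> S")
        case True
        then have "{x,y} \<in> EC" "{y,z} \<in> EC" using H2 yv e1 by auto
        then show ?thesis using IH e1 \<open>zs = y # rest\<close> by auto
      next
        case False
        then have "{x,y} \<notin> EC" "{y,z} \<notin> EC" using H1 by auto
        then show ?thesis using IH e1 \<open>zs = y # rest\<close> by auto
      qed
    qed
  qed
qed

lemma bt_app1: "set (butlast (tl (as @ [v]))) \<subseteq> set as"
  by (cases as) auto

lemma bt_app2: "set (butlast (tl (v # bs))) \<subseteq> set bs"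
  by (auto dest: in_set_butlastD)

lemma graph_finite: "graph V E \<Longrightarrow> finite E"
proof -
  assume g: "graph V E"
  have "E \<subseteq> Pow V" using g unfolding graph_def by auto
  then show ?thesis using g finite_subset unfolding graph_def by blast
qed

lemma pp_exists: "graph V E \<Longrightarrow> \<exists>P. path_partition V E P"
proof -
  assume g: "graph V E"
  have "path_partition V E ((\<lambda>e. {e}) ` E)"
    unfolding path_partition_def
  proof (intro conjI ballI)
    fix p assume "p \<in> (\<lambda>e. {e}) ` E"
    then obtain e where e: "e \<in> E" "p = {e}" by auto
    then obtain a b where ab: "e = {a,b}" "a \<noteq> b" "a \<in> V" "b \<in> V" using g unfolding graph_def by blast
    show "\<exists>xs. is_path V E xs \<and> p = walk_edges xs"
      by (rule exI[of _ "[a,b]"]) (use e ab in \<open>auto simp: is_path_alt\<close>)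
  next
    show "pairwise disjnt ((\<lambda>e. {e}) ` E)" by (auto simp: pairwise_def disjnt_def)
  next
    show "\<Union> ((\<lambda>e. {e}) ` E) = E" by auto
  qed
  then show ?thesis by blast
qed

lemma pn_le: "path_partition V E P \<Longrightarrow> pn V E \<le> card P"
  unfolding pn_def by (rule Least_le) blast

lemma pn_ex: "graph V E \<Longrightarrow> \<exists>P. path_partition V E P \<and> card P = pn V E"
proof -
  assume "graph V E"
  then obtain P where "path_partition V E P" using pp_exists by blast
  then have "\<exists>n. \<exists>P. path_partition V E P \<and> card P = n" by blast
  from LeastI_ex[OF this] show ?thesis unfolding pn_def .
qed

lemma pp_finite: "graph V E \<Longrightarrow> path_partition V E P \<Longrightarrow> finite P"
proof -
  assume "graph V E" "path_partition V E P"
  then have "P \<subseteq> Pow E" "finite E" using graph_finite unfolding path_partition_def by auto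
  then show ?thesis using finite_subset by blast
qed

lemma path_ne: "is_path V E xs \<Longrightarrow> walk_edges xs \<noteq> {}"
proof -
  assume "is_path V E xs"
  then have "0 < length xs - 1" unfolding is_path_alt by auto
  then have "{xs!0, xs!Suc 0} \<in> walk_edges xs" unfolding we_nth by blast
  then show ?thesis by blast
qed

lemma walk_v_last: "v \<notin> set as \<Longrightarrow> \<forall>e\<in>walk_edges (as@[v]). v \<in> e \<longrightarrow> e = {last as, v}"
proof (cases "as = []")
  case False
  assume "v \<notin> set as"
  then show ?thesis using False we_append[of as "[v]"] by (auto dest!: we_sub)
qed simp

lemma walk_v_hd: "v \<notin> set bs \<Longrightarrow> \<forall>e\<in>walk_edges (v#bs). v \<in> e \<longrightarrow> e = {v, hd bs}"
proof (cases bs)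
  case (Cons b bs')
  assume "v \<notin> set bs"
  then show ?thesis using Cons by (auto dest!: we_sub)
qed simp

lemma in_tl: "x \<in> set (tl xs) \<Longrightarrow> x \<in> set xs"
  by (cases xs) auto



lemma main:
  assumes g: "graph V E" and cyc: "is_cycle V E (v#cs)" and dv: "degree E v = 3"
    and dw: "\<forall>w\<in>set cs. degree E w = 2"
  shows "pn V E = pn V (E - cycle_edges (v#cs)) + 1"
proof -
  define EC where "EC = cycle_edges (v#cs)"
  define S where "S = set (v#cs)"
  define W where "W = walk_edges (v#cs)"
  have fin: "finite E" using g graph_finite by blast
  have cyc': "3 \<le> length (v#cs)" "distinct (v#cs)" "set (v#cs) \<subseteq> V" "EC \<subseteq> E"
    using cyc unfolding is_cycle_alt EC_def by auto
  have csne: "cs \<noteq> []" using cyc' by auto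
  have EC_eq: "EC = W \<union> {{last cs, v}}" using csne by (simp add: EC_def W_def cycle_edges_def)
  have H1: "\<forall>e\<in>EC. e \<subseteq> S" unfolding EC_eq W_def S_def using csne by (auto dest!: we_sub)
  have deg2: "\<forall>u\<in>S. card {e\<in>EC. u\<in>e} = 2" unfolding S_def EC_def using cyc_deg[OF cyc'(2) cyc'(1)] by blast
  have H2: "\<forall>u\<in>S. u \<noteq> v \<longrightarrow> (\<forall>e\<in>E. u \<in> e \<longrightarrow> e \<in> EC)"
  proof (intro ballI impI)
    fix u e assume u: "u \<in> S" "u \<noteq> v" and e: "e \<in> E" "u \<in> e"
    have "{e\<in>EC. u\<in>e} \<subseteq> {e\<in>E. u\<in>e}" using cyc' by auto
    moreover have "card {e\<in>E. u\<in>e} = 2" using dw u unfolding S_def degree_def by auto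
    moreover have "finite {e\<in>E. u\<in>e}" using fin by auto
    ultimately have "{e\<in>EC. u\<in>e} = {e\<in>E. u\<in>e}" using deg2 u by (metis card_subset_eq)
    then show "e \<in> EC" using e by blast
  qed
  have "{e\<in>E. v\<in>e} = {e\<in>EC. v\<in>e} \<union> {e\<in>E-EC. v\<in>e}" using cyc' by auto
  then have "card {e\<in>E. v\<in>e} = card {e\<in>EC. v\<in>e} + card {e\<in>E-EC. v\<in>e}"
    using fin finite_subset[OF cyc'(4) fin] by (simp add: card_Un_disjoint disjoint_iff)
  then have "card {e\<in>E-EC. v\<in>e} = 1" using dv deg2 unfolding S_def degree_def by auto
  then obtain e0 where e0: "{e\<in>E-EC. v\<in>e} = {e0}" using card_1_singletonE by blast
  have e0': "e0 \<in> E" "e0 \<notin> EC" "v \<in> e0" "\<forall>e\<in>E-EC. v\<in>e \<longrightarrow> e = e0" using e0 by auto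
  have e0u: "e = e0" if "e \<in> E" "e \<notin> EC" "v \<in> e" for e
    using that e0 by blast

  have keyB: "\<forall>xs. is_path V E xs \<longrightarrow> walk_edges xs \<inter> EC \<noteq> {} \<longrightarrow> \<not> walk_edges xs \<subseteq> EC
      \<longrightarrow> e0 \<in> walk_edges xs"
  proof (intro allI impI)
    fix xs assume p: "is_path V E xs" and m: "walk_edges xs \<inter> EC \<noteq> {}" and n: "\<not> walk_edges xs \<subseteq> EC"
    have pe: "walk_edges xs \<subseteq> E" "distinct xs" using p unfolding is_path_alt by auto
    show "e0 \<in> walk_edges xs"
    proof (cases "v \<in> set xs")
      case False
      then have "v \<notin> set (butlast (tl xs))" by (auto dest: in_set_butlastD in_tl)
      then have "walk_edges xs \<subseteq> EC \<or> walk_edges xs \<inter> EC = {}" by (rule status[OF H1 H2 pe(1)])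
      then show ?thesis using m n by auto
    next
      case True
      then obtain as bs where xs: "xs = as @ v # bs" by (meson split_list)
      have d: "v \<notin> set as" "v \<notin> set bs" using pe(2) xs by auto
      have split: "walk_edges xs = walk_edges (as@[v]) \<union> walk_edges (v#bs)" using xs we_split by simp
      have A: "walk_edges (as@[v]) \<subseteq> EC \<or> walk_edges (as@[v]) \<inter> EC = {}"
        by (rule status[OF H1 H2]) (use pe(1) split bt_app1[of as v] d(1) in blast)+
      have B: "walk_edges (v#bs) \<subseteq> EC \<or> walk_edges (v#bs) \<inter> EC = {}"
        by (rule status[OF H1 H2]) (use pe(1) split bt_app2[of v bs] d(2) in blast)+
      from A show ?thesis
      proof
        assume A1: "walk_edges (as@[v]) \<subseteq> EC"
        from B show ?thesis
        proof
          assume "walk_edges (v#bs) \<subseteq> EC"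
          then have "walk_edges xs \<subseteq> EC" using A1 split by simp
          with n show ?thesis by simp
        next
          assume B2: "walk_edges (v#bs) \<inter> EC = {}"
          have "bs \<noteq> []"
          proof
            assume "bs = []"
            then have "walk_edges xs \<subseteq> EC" using A1 split by simp
            with n show False by simp
          qed
          then obtain b bs' where bs: "bs = b # bs'" by (cases bs) auto
          have i1: "{v,b} \<in> walk_edges (v#bs)" using bs by simp
          have i2: "{v,b} \<in> walk_edges xs" using i1 by (simp add: split)
          have "{v,b} \<in> E" using pe(1) i2 by (rule subsetD)
          moreover have "{v,b} \<notin> EC" using B2 i1 by (auto simp: disjoint_iff)
          ultimately have "{v,b} = e0" by (rule e0u) simp
          then show ?thesis using i2 by simp
        qed
      next
        assume A2: "walk_edges (as@[v]) \<inter> EC = {}"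
        from B show ?thesis
        proof
          assume B1: "walk_edges (v#bs) \<subseteq> EC"
          have "as \<noteq> []"
          proof
            assume "as = []"
            then have "walk_edges xs \<subseteq> EC" using B1 split by simp
            with n show False by simp
          qed
          then have i1: "{last as, v} \<in> walk_edges (as@[v])" using we_append[of as "[v]"] by auto
          have i2: "{last as, v} \<in> walk_edges xs" using i1 by (simp add: split)
          have "{last as, v} \<in> E" using pe(1) i2 by (rule subsetD)
          moreover have "{last as, v} \<notin> EC" using A2 i1 by (auto simp: disjoint_iff)
          ultimately have "{last as, v} = e0" by (rule e0u) simp
          then show ?thesis using i2 by simp
        next
          assume "walk_edges (v#bs) \<inter> EC = {}"
          then have "walk_edges xs \<inter> EC = {}" using A2 split by auto
          with m show ?thesis by simp
        qed
      qed
    qed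
  qed

  have restr: "\<forall>xs. is_path V E xs \<longrightarrow> \<not> walk_edges xs \<subseteq> EC \<longrightarrow>
      (\<exists>ys. is_path V (E-EC) ys \<and> walk_edges xs - EC = walk_edges ys)"
  proof (intro allI impI)
    fix xs assume p: "is_path V E xs" and n: "\<not> walk_edges xs \<subseteq> EC"
    have pe: "walk_edges xs \<subseteq> E" "distinct xs" "set xs \<subseteq> V" "2 \<le> length xs" using p unfolding is_path_alt by auto
    show "\<exists>ys. is_path V (E-EC) ys \<and> walk_edges xs - EC = walk_edges ys"
    proof (cases "v \<in> set xs")
      case False
      then have "v \<notin> set (butlast (tl xs))" by (auto dest: in_set_butlastD in_tl)
      then have "walk_edges xs \<inter> EC = {}" using status[OF H1 H2 pe(1)] n by blast
      then show ?thesis using pe by (intro exI[of _ xs]) (auto simp: is_path_alt)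
    next
      case True
      then obtain as bs where xs: "xs = as @ v # bs" by (meson split_list)
      have d: "v \<notin> set as" "v \<notin> set bs" using pe(2) xs by auto
      have split: "walk_edges xs = walk_edges (as@[v]) \<union> walk_edges (v#bs)" using xs we_split by simp
      have A: "walk_edges (as@[v]) \<subseteq> EC \<or> walk_edges (as@[v]) \<inter> EC = {}"
        by (rule status[OF H1 H2]) (use pe(1) split bt_app1[of as v] d(1) in blast)+
      have B: "walk_edges (v#bs) \<subseteq> EC \<or> walk_edges (v#bs) \<inter> EC = {}"
        by (rule status[OF H1 H2]) (use pe(1) split bt_app2[of v bs] d(2) in blast)+
      consider "walk_edges (as@[v]) \<inter> EC = {}" "walk_edges (v#bs) \<inter> EC = {}"
        | "walk_edges (as@[v]) \<subseteq> EC" "walk_edges (v#bs) \<inter> EC = {}"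
        | "walk_edges (v#bs) \<subseteq> EC" "walk_edges (as@[v]) \<inter> EC = {}"
        using A B split n by blast
      then show ?thesis
      proof cases
        case 1
        then show ?thesis using pe split by (intro exI[of _ xs]) (auto simp: is_path_alt)
      next
        case 2
        then have "bs \<noteq> []" using split n by auto
        then have "2 \<le> length (v#bs)" by (cases bs) auto
        then show ?thesis using 2 pe split xs by (intro exI[of _ "v#bs"]) (auto simp: is_path_alt)
      next
        case 3
        then have "as \<noteq> []" using split n by auto
        then have "2 \<le> length (as@[v])" by (cases as) auto
        then show ?thesis using 3 pe split xs by (intro exI[of _ "as@[v]"]) (auto simp: is_path_alt)
      qed
    qed
  qed

  obtain P where P: "path_partition V E P" "card P = pn V E" using pn_ex g by blast
  have finP: "finite P" using pp_finite g P by blast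
  have Pp: "\<forall>p\<in>P. \<exists>xs. is_path V E xs \<and> p = walk_edges xs" "pairwise disjnt P" "\<Union>P = E"
    using P unfolding path_partition_def by auto
  have ex_sub: "\<exists>p\<in>P. p \<subseteq> EC"
  proof (rule ccontr)
    assume no: "\<not> ?thesis"
    have hc: "{v, hd cs} \<in> EC" using csne EC_eq W_def by (cases cs) auto
    then obtain p where p: "p \<in> P" "{v, hd cs} \<in> p" using Pp(3) cyc'(4) by blast
    have e0in: "e0 \<in> q" if q: "q \<in> P" "q \<inter> EC \<noteq> {}" for q
    proof -
      obtain xs where xs: "is_path V E xs" "q = walk_edges xs" using Pp(1) q(1) by blast
      have "\<not> q \<subseteq> EC" using no q(1) by blast
      then show ?thesis using keyB[rule_format, OF xs(1)] xs(2) q(2) by simp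
    qed
    have e0p: "e0 \<in> p" using e0in p hc by blast
    have all: "EC \<subseteq> p"
    proof
      fix c assume c: "c \<in> EC"
      then obtain q where q: "q \<in> P" "c \<in> q" using Pp(3) cyc'(4) by blast
      then have "e0 \<in> q" using e0in c by blast
      then have "q = p" using Pp(2) p e0p q by (meson disjnt_iff pairwiseD)
      then show "c \<in> p" using q by simp
    qed
    obtain xs where xs: "is_path V E xs" "p = walk_edges xs" using Pp(1) p by blast
    have dx: "distinct xs" using xs unfolding is_path_alt by auto
    obtain a b where ab: "e0 = {a,b}" "a \<in> set xs" "b \<in> set xs" using we_sub[of e0 xs] e0p xs(2) by blast
    have "v \<in> set xs" using ab e0'(3) by auto
    then obtain as bs where xsd: "xs = as @ v # bs" by (meson split_list)
    have d: "v \<notin> set as" "v \<notin> set bs" using dx xsd by auto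
    have split: "walk_edges xs = walk_edges (as@[v]) \<union> walk_edges (v#bs)" using xsd we_split by simp
    have sub2: "{e \<in> p. v \<in> e} \<subseteq> {{last as, v}, {v, hd bs}}"
    proof
      fix e assume e: "e \<in> {e \<in> p. v \<in> e}"
      then have "e \<in> walk_edges (as@[v]) \<or> e \<in> walk_edges (v#bs)" "v \<in> e" using split xs(2) by auto
      then show "e \<in> {{last as, v}, {v, hd bs}}" using walk_v_last[OF d(1)] walk_v_hd[OF d(2)] by auto
    qed
    have c2': "card {{last as, v}, {v, hd bs}} \<le> 2" by (simp add: card_insert_if)
    have pE: "p \<subseteq> E" using Pp(3) p(1) by blast
    have finv: "finite {e \<in> p. v \<in> e}" using finite_subset[OF pE fin] by simp
    have c2: "card {e \<in> p. v \<in> e} \<le> 2"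
      using card_mono[OF _ sub2] c2' by simp
    have sub3: "insert e0 {e\<in>EC. v\<in>e} \<subseteq> {e \<in> p. v \<in> e}" using all e0p e0'(3) by blast
    have cEC: "card {e\<in>EC. v\<in>e} = 2" using deg2 unfolding S_def by simp
    have finEC: "finite {e\<in>EC. v\<in>e}" using finite_subset[OF cyc'(4) fin] by simp
    have "card (insert e0 {e\<in>EC. v\<in>e}) = 3"
      using card_insert_disjoint[OF finEC] e0'(2) cEC by simp
    then have "3 \<le> card {e \<in> p. v \<in> e}" using card_mono[OF finv sub3] by simp
    then show False using c2 by simp
  qed
  define P2 where "P2 = (\<lambda>p. p - EC) ` {p\<in>P. \<not> p \<subseteq> EC}"
  have pp2: "path_partition V (E-EC) P2"
    unfolding path_partition_def
  proof (intro conjI ballI)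
    fix p assume "p \<in> P2"
    then obtain q where q: "q \<in> P" "\<not> q \<subseteq> EC" "p = q - EC" unfolding P2_def by auto
    then obtain xs where "is_path V E xs" "q = walk_edges xs" using Pp(1) by blast
    then show "\<exists>xs. is_path V (E - EC) xs \<and> p = walk_edges xs" using restr[rule_format, of xs] q by simp
  next
    show "pairwise disjnt P2"
    proof (rule pairwiseI)
      fix x y assume "x \<in> P2" "y \<in> P2" "x \<noteq> y"
      then obtain q1 q2 where "q1 \<in> P" "q2 \<in> P" "x = q1 - EC" "y = q2 - EC" "q1 \<noteq> q2"
        unfolding P2_def by auto
      then have "disjnt q1 q2" using Pp(2) by (simp add: pairwiseD)
      then show "disjnt x y" using \<open>x = q1 - EC\<close> \<open>y = q2 - EC\<close> by (auto simp: disjnt_def)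
    qed
  next
    show "\<Union>P2 = E - EC" using Pp(3) unfolding P2_def by blast
  qed
  have "card P2 \<le> card {p\<in>P. \<not> p \<subseteq> EC}" by (simp add: P2_def card_image_le finP)
  also have "\<dots> < card P" using ex_sub finP by (intro psubset_card_mono) auto
  finally have ge: "pn V (E-EC) + 1 \<le> pn V E" using pn_le[OF pp2] P(2) by linarith

  have g2: "graph V (E-EC)" using g unfolding graph_def by auto
  obtain P' where P': "path_partition V (E-EC) P'" "card P' = pn V (E-EC)" using pn_ex g2 by blast
  have finP': "finite P'" using pp_finite g2 P'(1) by blast
  have Pp': "\<forall>p\<in>P'. \<exists>xs. is_path V (E-EC) xs \<and> p = walk_edges xs" "pairwise disjnt P'" "\<Union>P' = E - EC"
    using P' unfolding path_partition_def by auto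
  have sub': "\<forall>p\<in>P'. p \<subseteq> E - EC \<and> p \<noteq> {}"
  proof
    fix p assume p: "p \<in> P'"
    then obtain xs where "is_path V (E-EC) xs" "p = walk_edges xs" using Pp'(1) by blast
    then have "p \<noteq> {}" using path_ne by blast
    moreover have "p \<subseteq> E - EC" using p Pp'(3) by blast
    ultimately show "p \<subseteq> E - EC \<and> p \<noteq> {}" by simp
  qed
  have "e0 \<in> \<Union>P'" using Pp'(3) e0'(1,2) by simp
  then obtain Q where Q: "Q \<in> P'" "e0 \<in> Q" by blast
  obtain xs where xs: "is_path V (E-EC) xs" "Q = walk_edges xs" using Pp'(1) Q(1) by blast
  obtain a b where ab: "e0 = {a,b}" "a \<in> set xs" "b \<in> set xs" using we_sub[of e0 xs] Q(2) xs(2) by blast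
  have "v \<in> set xs" using ab e0'(3) by auto
  then obtain as bs where xsd: "xs = as @ v # bs" by (meson split_list)
  have dx: "distinct xs" "walk_edges xs \<subseteq> E - EC" "set xs \<subseteq> V" "2 \<le> length xs"
    using xs unfolding is_path_alt by auto
  have d: "v \<notin> set as" "v \<notin> set bs" "set as \<inter> set bs = {}" using dx xsd by auto
  have split: "walk_edges xs = walk_edges (as@[v]) \<union> walk_edges (v#bs)" using xsd we_split by simp
  have "as = [] \<or> bs = []"
  proof (rule ccontr)
    assume "\<not> ?thesis"
    then have ne: "as \<noteq> []" "bs \<noteq> []" by auto
    have "{last as, v} \<in> walk_edges (as@[v])" using ne we_append[of as "[v]"] by auto
    then have "{last as, v} \<in> walk_edges xs" by (simp add: split)
    then have x1: "{last as, v} \<in> E - EC" using dx(2) by blast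
    have "{v, hd bs} \<in> walk_edges (v#bs)" using ne by (cases bs) auto
    then have "{v, hd bs} \<in> walk_edges xs" by (simp add: split)
    then have x2: "{v, hd bs} \<in> E - EC" using dx(2) by blast
    have "{last as, v} = e0" using x1 by (intro e0u) auto
    moreover have "{v, hd bs} = e0" using x2 by (intro e0u) auto
    ultimately have "{last as, v} = {v, hd bs}" by simp
    moreover have "last as \<noteq> v" "last as \<in> set as" "hd bs \<in> set bs" using ne d by auto
    ultimately show False using d(3) by (auto simp: doubleton_eq_iff)
  qed
  then obtain ys where ys: "is_path V (E-EC) (ys@[v])" "Q = walk_edges (ys@[v])"
  proof
    assume "as = []"
    then have r: "rev xs = rev bs @ [v]" using xsd by simp
    have "is_path V (E-EC) (rev xs)" "Q = walk_edges (rev xs)"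
      using xs by (auto simp: is_path_alt we_rev)
    then have "is_path V (E-EC) (rev bs @ [v])" "Q = walk_edges (rev bs @ [v])" using r by simp_all
    then show thesis by (rule that)
  next
    assume "bs = []"
    then have "is_path V (E-EC) (as @ [v])" "Q = walk_edges (as @ [v])" using xs xsd by simp_all
    then show thesis by (rule that)
  qed
  have ysd: "distinct (ys@[v])" "walk_edges (ys@[v]) \<subseteq> E - EC" "set ys \<subseteq> V" "ys \<noteq> []"
    using ys unfolding is_path_alt by auto
  have disj: "set ys \<inter> set (v#cs) = {}"
  proof -
    { fix u assume u: "u \<in> set ys" "u \<in> set (v#cs)"
      have uv: "u \<noteq> v" using ysd(1) u by auto
      have uS: "u \<in> S" using u S_def by simp
      have "2 \<le> length (ys@[v])" using ysd(4) by (cases ys) auto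
      then obtain e where e: "e \<in> walk_edges (ys@[v])" "u \<in> e" using vertex_in_edge[of "ys@[v]" u] u by auto
      then have eE: "e \<in> E" "e \<notin> EC" using ysd(2) by blast+
      have "e \<in> EC" using H2[rule_format, OF uS uv eE(1) e(2)] .
      then have False using eE by simp }
    then show ?thesis by blast
  qed
  define zs where "zs = ys @ v # cs"
  have wz: "walk_edges zs = Q \<union> W" using we_split ys(2) W_def zs_def by simp
  have QE0: "Q \<subseteq> E - EC" using ysd(2) ys(2) by simp
  have WEC: "W \<subseteq> EC" using EC_eq by auto
  have pz: "is_path V E zs" unfolding is_path_alt
  proof (intro conjI)
    show "2 \<le> length zs" using zs_def csne by (cases cs) auto
    show "distinct zs" using zs_def ysd(1) cyc'(2) disj by simp
    show "set zs \<subseteq> V" using zs_def ysd(3) cyc'(3) by simp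
    show "walk_edges zs \<subseteq> E" using wz QE0 WEC cyc'(4) by blast
  qed
  define R where "R = {{last cs, v}}"
  have lcv: "last cs \<noteq> v" "last cs \<in> set cs" using csne cyc'(2) by auto
  have REC: "R \<subseteq> EC" using EC_eq R_def by auto
  have pR: "is_path V E [last cs, v]" "R = walk_edges [last cs, v]"
  proof -
    show "R = walk_edges [last cs, v]" using R_def by simp
    have "{last cs, v} \<in> E" using REC cyc'(4) R_def by blast
    then show "is_path V E [last cs, v]" unfolding is_path_alt using lcv cyc'(3) by auto
  qed
  have RW: "{last cs, v} \<notin> W"
  proof
    assume a: "{last cs, v} \<in> W"
    obtain c cs' where cs1: "cs = c # cs'" using csne by (cases cs) auto
    obtain d r where cs2: "cs' = d # r" using cyc'(1) cs1 by (cases cs') auto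
    have cs: "cs = c # d # r" using cs1 cs2 by simp
    have "last cs \<noteq> c" using cyc'(2) cs by (metis distinct.simps(2) last_ConsR last_in_set list.distinct(1))
    moreover have "{last cs, v} \<notin> walk_edges cs"
    proof
      assume "{last cs, v} \<in> walk_edges cs"
      then obtain a b where "{last cs, v} = {a,b}" "a \<in> set cs" "b \<in> set cs" using we_sub by blast
      then have "v \<in> set cs" by (auto simp: doubleton_eq_iff)
      then show False using cyc'(2) by simp
    qed
    ultimately show False using a cs lcv unfolding W_def by (auto simp: doubleton_eq_iff)
  qed
  have Wne: "{v, hd cs} \<in> W" using csne W_def by (cases cs) auto
  define P3 where "P3 = insert (Q \<union> W) (insert R (P' - {Q}))"
  have QE: "Q \<inter> EC = {}" using QE0 by blast
  have PE: "p \<inter> Q = {}" "p \<inter> EC = {}" if "p \<in> P' - {Q}" for p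
  proof -
    have "disjnt p Q" using Pp'(2) that Q(1) by (auto dest: pairwiseD)
    then show "p \<inter> Q = {}" by (simp add: disjnt_def)
    show "p \<inter> EC = {}" using sub' that by blast
  qed
  have pd: "pairwise disjnt (P'-{Q})" using Pp'(2) by (meson Diff_subset pairwise_subset)
  have pp3: "path_partition V E P3"
    unfolding path_partition_def
  proof (intro conjI ballI)
    fix p assume "p \<in> P3"
    then consider "p = Q \<union> W" | "p = R" | "p \<in> P'" unfolding P3_def by auto
    then show "\<exists>xs. is_path V E xs \<and> p = walk_edges xs"
    proof cases
      case 1 then show ?thesis using pz wz by blast
    next
      case 2 then show ?thesis using pR by blast
    next
      case 3
      then obtain xs where "is_path V (E-EC) xs" "p = walk_edges xs" using Pp'(1) by blast
      then show ?thesis by (auto simp: is_path_alt)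
    qed
  next
    have RQW: "disjnt R (Q \<union> W)" using RW QE REC R_def by (auto simp: disjnt_def)
    have a1: "pairwise disjnt (insert R (P' - {Q}))"
      unfolding pairwise_insert
    proof (rule conjI)
      show "\<forall>y. y \<in> P' - {Q} \<and> y \<noteq> R \<longrightarrow> disjnt R y \<and> disjnt y R"
      proof (intro allI impI)
        fix y assume "y \<in> P' - {Q} \<and> y \<noteq> R"
        then have "y \<inter> EC = {}" using PE by blast
        then have "R \<inter> y = {}" using REC by blast
        then show "disjnt R y \<and> disjnt y R" by (auto simp: disjnt_def)
      qed
    qed (rule pd)
    show "pairwise disjnt P3"
      unfolding P3_def pairwise_insert[of _ "Q \<union> W"]
    proof (rule conjI)
      show "pairwise disjnt (insert R (P' - {Q}))" by (rule a1)
    next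
      show "\<forall>y. y \<in> insert R (P' - {Q}) \<and> y \<noteq> Q \<union> W \<longrightarrow> disjnt (Q \<union> W) y \<and> disjnt y (Q \<union> W)"
      proof (intro allI impI)
        fix y assume y0: "y \<in> insert R (P' - {Q}) \<and> y \<noteq> Q \<union> W"
        then have y: "y \<in> insert R (P' - {Q})" by simp
        show "disjnt (Q \<union> W) y \<and> disjnt y (Q \<union> W)"
        proof (cases "y = R")
          case True then show ?thesis using RQW by (simp add: disjnt_sym)
        next
          case False
          then have "y \<in> P' - {Q}" using y by simp
          then have "y \<inter> Q = {}" "y \<inter> EC = {}" using PE by auto
          then show ?thesis using WEC by (auto simp: disjnt_def)
        qed
      qed
    qed
  next
    have "\<Union>P3 = Q \<union> W \<union> R \<union> \<Union>(P' - {Q})" unfolding P3_def by auto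
    also have "\<dots> = \<Union>P' \<union> EC" using Q(1) EC_eq R_def by auto
    also have "\<dots> = E" using Pp'(3) cyc'(4) by auto
    finally show "\<Union>P3 = E" .
  qed
  have n1: "Q \<union> W \<notin> insert R (P' - {Q})"
  proof
    assume a: "Q \<union> W \<in> insert R (P' - {Q})"
    have "e0 \<notin> R" using e0'(2) REC by blast
    then have "Q \<union> W \<noteq> R" using Q(2) by blast
    then have "Q \<union> W \<in> P'" using a by simp
    then have "Q \<union> W \<subseteq> E - EC" using sub' by blast
    then show False using Wne WEC by blast
  qed
  have n2: "R \<notin> P' - {Q}"
  proof
    assume "R \<in> P' - {Q}"
    then have "R \<subseteq> E - EC" using sub' by blast
    then show False using REC R_def by blast
  qed
  have finD: "finite (P' - {Q})" using finP' by simp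
  have "card P3 = Suc (card (insert R (P' - {Q})))" unfolding P3_def using n1 finD by simp
  also have "\<dots> = Suc (Suc (card (P' - {Q})))" using n2 finD by simp
  also have "\<dots> = card P' + 1"
  proof -
    have "card P' > 0" using finP' Q(1) card_gt_0_iff by blast
    then show ?thesis using card_Diff_singleton[OF Q(1)] by simp
  qed
  finally have "card P3 = card P' + 1" .
  then have le: "pn V E \<le> pn V (E-EC) + 1" using pn_le[OF pp3] P'(2) by simp
  from ge le show ?thesis using EC_def by simp
qed


theorem lemma5:
  fixes V :: "'a set" and E :: "'a set set" and C :: "'a list"
  assumes "graph V E"
    and "is_pan_cycle V E C"
  shows "pn V E = pn V (E - cycle_edges C) + 1"
proof -
  from assms(2) obtain v where cyc: "is_cycle V E C" and v: "v \<in> set C" "degree E v = 3"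
    "\<forall>w\<in>set C. w \<noteq> v \<longrightarrow> degree E w = 2"
    unfolding is_pan_cycle_def by blast
  have cc: "3 \<le> length C" "distinct C" "set C \<subseteq> V" "cycle_edges C \<subseteq> E"
    using cyc unfolding is_cycle_alt by auto
  have l2: "2 \<le> length C" using cc(1) by simp
  obtain ds where ds: "cycle_edges (v#ds) = cycle_edges C" "set (v#ds) = set C"
    "distinct (v#ds) = distinct C" "length (v#ds) = length C"
    using rotate_to[OF l2 v(1)] by blast
  have c2: "is_cycle V E (v#ds)" unfolding is_cycle_alt using ds cc by simp
  have dw: "\<forall>w\<in>set ds. degree E w = 2"
  proof
    fix w assume w: "w \<in> set ds"
    then have "w \<noteq> v" using ds(3) cc(2) by auto
    moreover have "w \<in> set C" using ds(2) w by auto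
    ultimately show "degree E w = 2" using v(3) by blast
  qed
  from main[OF assms(1) c2 v(2) dw] ds(1) show ?thesis by simp
qed

end
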